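(* Every $\mathrm{LTL}(\sim)$-formula $\varphi$ that does not contain the operator $\mathsf X$ is stutter-invariant: for all teams $T,T'$ with $T\equiv_{\mathrm{st}}T'$ we have $T\models\varphi\iff T'\models\varphi$.
   Context: Let $\mathrm{AP}$ be a countably infinite set of atomic propositions. A trace is an infinite sequence $t=t(0)t(1)\cdots\in(\wp\mathrm{AP})^\omega$, and $t^i=t(i)t(i+1)\cdots$. A team is a (possibly empty) set $T$ of traces, and $T^i=\{t^i: t\in T\}$. Formulas of $\mathrm{LTL}(\sim)$ are given by $\varphi::=p\mid\neg\varphi\mid\varphi\wedge\varphi\mid\varphi\vee\varphi\mid\mathsf X\varphi\mid\mathsf F\varphi\mid\mathsf G\varphi\mid\varphi\,\mathsf U\,\varphi\mid\varphi\,\mathsf R\,\varphi\mid{\sim}\varphi$ with $p\in\mathrm{AP}$. Synchronous team semantics: $T\models p$ iff $p\in t(0)$ for all $t\in T$; $T\models\neg\varphi$ iff $\{t\}\not\models\varphi$ for all $t\in T$; $T\models\varphi\wedge\psi$ iff $T\models\varphi$ and $T\models\psi$; $T\models\varphi\vee\psi$ iff $T=S\cup U$ for some $S,U$ with $S\models\varphi$ and $U\models\psi$; $T\models\mathsf X\varphi$ iff $T^1\models\varphi$; $T\models\mathsf F\varphi$ iff $T^k\models\varphi$ for some $k\ge0$; $T\models\mathsf G\varphi$ iff $T^k\models\varphi$ for all $k\ge0$; $T\models\varphi\,\mathsf U\,\psi$ iff there is $k\ge0$ with $T^k\models\psi$ and $T^j\models\varphi$ for all $j<k$; $T\models\varphi\,\mathsf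 R\,\psi$ iff for all $k\ge0$, $T^k\models\psi$ or $T^j\models\varphi$ for some $j<k$; $T\models{\sim}\varphi$ iff $T\not\models\varphi$. A stuttering function of a trace $t$ is a strictly increasing function $f:\mathbb N\to\mathbb N$ with $f(0)=0$ such that $t(f(k))=t(f(k)+1)=\cdots=t(f(k+1)-1)$ for all $k\ge0$. A stuttering function of a team $T$ is a function that is a stuttering function of every $t\in T$. For $f:\mathbb N\to\mathbb N$, $t[f]:=t(f(0))t(f(1))t(f(2))\cdots$ and $T[f]:=\{t[f]:t\in T\}$. Teams $T,T'$ are stutter-equivalent ($T\equiv_{\mathrm{st}}T'$) if there are a stuttering function $f$ of $T$ and a stuttering function $f'$ of $T'$ with $T[f]=T'[f']$. *)

theory Defs
  imports "HOL-Library.Countable_Set"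
begin

type_synonym 'a trace = "nat \<Rightarrow> 'a set"
type_synonym 'a team = "'a trace set"

datatype 'a ltl =
    Prop 'a
  | Neg "'a ltl"
  | Conj "'a ltl" "'a ltl"
  | Disj "'a ltl" "'a ltl"
  | Next "'a ltl"
  | Fut "'a ltl"
  | Glob "'a ltl"
  | Until "'a ltl" "'a ltl"
  | Release "'a ltl" "'a ltl"
  | Tilde "'a ltl"

definition suffix :: "nat \<Rightarrow> 'a trace \<Rightarrow> 'a trace" where
  "suffix i t = (\<lambda>n. t (i + n))"

definition team_suffix :: "nat \<Rightarrow> 'a team \<Rightarrow> 'a team" where
  "team_suffix i T = suffix i ` T"

primrec tsat :: "'a team \<Rightarrow> 'a ltl \<Rightarrow> bool" where
  "tsat T (Prop p) = (\<forall>t\<in>T. p \<in> t 0)"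
| "tsat T (Neg \<phi>) = (\<forall>t\<in>T. \<not> tsat {t} \<phi>)"
| "tsat T (Conj \<phi> \<psi>) = (tsat T \<phi> \<and> tsat T \<psi>)"
| "tsat T (Disj \<phi> \<psi>) = (\<exists>S U. T = S \<union> U \<and> tsat S \<phi> \<and> tsat U \<psi>)"
| "tsat T (Next \<phi>) = tsat (team_suffix 1 T) \<phi>"
| "tsat T (Fut \<phi>) = (\<exists>k. tsat (team_suffix k T) \<phi>)"
| "tsat T (Glob \<phi>) = (\<forall>k. tsat (team_suffix k T) \<phi>)"
| "tsat T (Until \<phi> \<psi>) =
     (\<exists>k. tsat (team_suffix k T) \<psi> \<and> (\<forall>j<k. tsat (team_suffix j T) \<phi>))"
| "tsat T (Release \<phi> \<psi>) =
     (\<forall>k. tsat (team_suffix k T) \<psi> \<or> (\<exists>j<k. tsat (team_suffix j T) \<phi>))"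
| "tsat T (Tilde \<phi>) = (\<not> tsat T \<phi>)"

primrec noX :: "'a ltl \<Rightarrow> bool" where
  "noX (Prop p) = True"
| "noX (Neg \<phi>) = noX \<phi>"
| "noX (Conj \<phi> \<psi>) = (noX \<phi> \<and> noX \<psi>)"
| "noX (Disj \<phi> \<psi>) = (noX \<phi> \<and> noX \<psi>)"
| "noX (Next \<phi>) = False"
| "noX (Fut \<phi>) = noX \<phi>"
| "noX (Glob \<phi>) = noX \<phi>"
| "noX (Until \<phi> \<psi>) = (noX \<phi> \<and> noX \<psi>)"
| "noX (Release \<phi> \<psi>) = (noX \<phi> \<and> noX \<psi>)"
| "noX (Tilde \<phi>) = noX \<phi>"

definition stuttering_fun :: "(nat \<Rightarrow> nat) \<Rightarrow> 'a trace \<Rightarrow> bool" where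
  "stuttering_fun f t \<longleftrightarrow> strict_mono f \<and> f 0 = 0 \<and>
     (\<forall>k i. f k \<le> i \<and> i < f (Suc k) \<longrightarrow> t i = t (f k))"

definition team_stuttering_fun :: "(nat \<Rightarrow> nat) \<Rightarrow> 'a team \<Rightarrow> bool" where
  "team_stuttering_fun f T \<longleftrightarrow> strict_mono f \<and> f 0 = 0 \<and> (\<forall>t\<in>T. stuttering_fun f t)"

definition team_comp :: "'a team \<Rightarrow> (nat \<Rightarrow> nat) \<Rightarrow> 'a team" where
  "team_comp T f = (\<lambda>t. t \<circ> f) ` T"

definition stutter_equiv :: "'a team \<Rightarrow> 'a team \<Rightarrow> bool" where
  "stutter_equiv T T' \<longleftrightarrow> (\<exists>f f'. team_stuttering_fun f T \<and> team_stuttering_fun f' T' \<and>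
     team_comp T f = team_comp T' f')"

end

theory Submission
  imports Defs
begin

lemma block:
  assumes sm: "strict_mono (f::nat\<Rightarrow>nat)" and f0: "f 0 = 0"
  shows "\<exists>k. f k \<le> m \<and> m < f (Suc k)"
proof -
  have ex: "\<exists>k. m < f k" using strict_mono_imp_increasing[OF sm, of "Suc m"] by (metis Suc_le_lessD)
  define k where "k = (LEAST k. m < f k)"
  have k1: "m < f k" unfolding k_def by (rule LeastI_ex[OF ex])
  have k2: "\<And>j. j < k \<Longrightarrow> \<not> m < f j" unfolding k_def using not_less_Least by blast
  have "k \<noteq> 0" using k1 f0 k2 by (metis less_nat_zero_code not_less_zero k1 f0)
  then obtain j where "k = Suc j" using not0_implies_Suc by blast
  then show ?thesis using k1 k2[of j] using not_less by blast
qed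

lemma stut_subset:
  "team_stuttering_fun f T \<Longrightarrow> S \<subseteq> T \<Longrightarrow> team_stuttering_fun f S"
  unfolding team_stuttering_fun_def by auto

lemma stut_block:
  assumes "team_stuttering_fun f T" "t \<in> T" "f k \<le> i" "i < f (Suc k)"
  shows "t i = t (f k)"
  using assms unfolding team_stuttering_fun_def stuttering_fun_def by blast

lemma stut_suffix:
  assumes st: "team_stuttering_fun f T" and a: "f k \<le> m" and b: "m < f (Suc k)"
  defines "g \<equiv> (\<lambda>n. if n = 0 then 0 else f (k+n) - m)"
  shows "team_stuttering_fun g (team_suffix m T) \<and>
         team_comp (team_suffix m T) g = team_suffix k (team_comp T f)"
proof -
  have sm: "strict_mono f" using st unfolding team_stuttering_fun_def by auto
  have ge: "\<And>n. n \<ge> 1 \<Longrightarrow> f (k+n) > m"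
  proof -
    fix n :: nat assume "n \<ge> 1"
    then have "f (Suc k) \<le> f (k+n)" using sm by (simp add: strict_mono_less_eq)
    then show "f (k+n) > m" using b by simp
  qed
  have smg: "strict_mono g"
  unfolding strict_mono_Suc_iff
  proof
    fix n
    show "g n < g (Suc n)"
    proof (cases "n = 0")
      case True then show ?thesis using ge[of 1] by (simp add: g_def)
    next
      case False
      have "f (k+n) < f (k + Suc n)" using sm by (simp add: strict_mono_less)
      then show ?thesis using False ge[of n] by (simp add: g_def)
    qed
  qed
  have stt: "stuttering_fun g s" if s: "s \<in> team_suffix m T" for s
  proof -
    obtain t where t: "t \<in> T" "s = suffix m t" using s unfolding team_suffix_def by auto
    have "\<forall>j i. g j \<le> i \<and> i < g (Suc j) \<longrightarrow> s i = s (g j)"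
    proof (intro allI impI)
      fix j i assume ji: "g j \<le> i \<and> i < g (Suc j)"
      show "s i = s (g j)"
      proof (cases "j = 0")
        case True
        then have "m + i < f (Suc k)" using ji ge[of 1] by (simp add: g_def)
        then have "t (m+i) = t (f k)" using stut_block[OF st t(1)] a by simp
        moreover have "t m = t (f k)" using stut_block[OF st t(1) a b] .
        ultimately show ?thesis using True t(2) by (simp add: g_def suffix_def)
      next
        case False
        have g1: "m + g j = f (k+j)" using False ge[of j] by (simp add: g_def)
        have g2: "m + g (Suc j) = f (Suc (k+j))" using ge[of "Suc j"] by (simp add: g_def)
        have "t (m+i) = t (f (k+j))" using stut_block[OF st t(1), of "k+j" "m+i"] ji g1 g2 by simp
        then show ?thesis using g1 t(2) by (simp add: suffix_def)
      qed
    qed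
    then show ?thesis unfolding stuttering_fun_def using smg by (simp add: g_def)
  qed
  have comp: "suffix m t \<circ> g = suffix k (t \<circ> f)" if t: "t \<in> T" for t
  proof
    fix n
    show "(suffix m t \<circ> g) n = suffix k (t \<circ> f) n"
    proof (cases "n = 0")
      case True
      then show ?thesis using stut_block[OF st t a b] by (simp add: g_def suffix_def)
    next
      case False
      then show ?thesis using ge[of n] by (simp add: g_def suffix_def)
    qed
  qed
  have "team_comp (team_suffix m T) g = team_suffix k (team_comp T f)"
    unfolding team_comp_def team_suffix_def image_image using comp by (auto simp: image_iff)
  moreover have "team_stuttering_fun g (team_suffix m T)"
    unfolding team_stuttering_fun_def using smg stt by (simp add: g_def)
  ultimately show ?thesis by blast
qed

lemma suffix_equiv:
  assumes IH: "\<And>T f. team_stuttering_fun f T \<Longrightarrow> tsat T \<phi> = tsat (team_comp T f) \<phi>"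
    and st: "team_stuttering_fun f T" and a: "f k \<le> m" and b: "m < f (Suc k)"
  shows "tsat (team_suffix m T) \<phi> = tsat (team_suffix k (team_comp T f)) \<phi>"
  using stut_suffix[OF st a b] IH by metis

lemma suffix_equiv':
  assumes IH: "\<And>T f. team_stuttering_fun f T \<Longrightarrow> tsat T \<phi> = tsat (team_comp T f) \<phi>"
    and st: "team_stuttering_fun f T"
  shows "tsat (team_suffix (f k) T) \<phi> = tsat (team_suffix k (team_comp T f)) \<phi>"
proof -
  have "strict_mono f" using st unfolding team_stuttering_fun_def by auto
  then have "f k < f (Suc k)" by (simp add: strict_mono_less)
  then show ?thesis using suffix_equiv[OF IH st] by simp
qed

lemma se:
  assumes st: "team_stuttering_fun f T"
    and IH: "\<forall>T f. team_stuttering_fun f T \<longrightarrow> tsat T \<phi> = tsat (team_comp T f) \<phi>"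
  shows "\<And>k m. f k \<le> m \<Longrightarrow> m < f (Suc k) \<Longrightarrow> tsat (team_suffix m T) \<phi> = tsat (team_suffix k (team_comp T f)) \<phi>"
    and "\<And>k. tsat (team_suffix (f k) T) \<phi> = tsat (team_suffix k (team_comp T f)) \<phi>"
  using suffix_equiv[OF IH[rule_format] st] suffix_equiv'[OF IH[rule_format] st] by auto

lemma comp_union: "team_comp (S \<union> U) f = team_comp S f \<union> team_comp U f"
  unfolding team_comp_def by auto

lemma key:
  "noX \<phi> \<Longrightarrow> team_stuttering_fun f T \<Longrightarrow> tsat T \<phi> = tsat (team_comp T f) \<phi>"
proof (induction \<phi> arbitrary: T f)
  case (Prop p)
  then have "f 0 = 0" unfolding team_stuttering_fun_def by auto
  then show ?case by (simp add: team_comp_def)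
next
  case (Neg \<phi>)
  have "\<And>t. t \<in> T \<Longrightarrow> tsat {t} \<phi> = tsat {t \<circ> f} \<phi>"
  proof -
    fix t assume t: "t \<in> T"
    have "team_stuttering_fun f {t}" using stut_subset[OF Neg.prems(2)] t by auto
    then show "tsat {t} \<phi> = tsat {t \<circ> f} \<phi>" using Neg by (simp add: team_comp_def)
  qed
  then show ?case by (simp add: team_comp_def)
next
  case (Conj \<phi> \<psi>)
  then show ?case by simp
next
  case (Disj \<phi> \<psi>)
  have ih1: "\<And>S. S \<subseteq> T \<Longrightarrow> tsat S \<phi> = tsat (team_comp S f) \<phi>"
  proof -
    fix S assume "S \<subseteq> T"
    then have "team_stuttering_fun f S" using stut_subset Disj.prems(2) by blast
    moreover have "noX \<phi>" using Disj.prems(1) by simp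
    ultimately show "tsat S \<phi> = tsat (team_comp S f) \<phi>" using Disj.IH(1) by blast
  qed
  have ih2: "\<And>S. S \<subseteq> T \<Longrightarrow> tsat S \<psi> = tsat (team_comp S f) \<psi>"
  proof -
    fix S assume "S \<subseteq> T"
    then have "team_stuttering_fun f S" using stut_subset Disj.prems(2) by blast
    moreover have "noX \<psi>" using Disj.prems(1) by simp
    ultimately show "tsat S \<psi> = tsat (team_comp S f) \<psi>" using Disj.IH(2) by blast
  qed
  show ?case
  proof
    assume "tsat T (Disj \<phi> \<psi>)"
    then have "\<exists>S U. T = S \<union> U \<and> tsat S \<phi> \<and> tsat U \<psi>" by (simp only: tsat.simps)
    then obtain S U where SU: "T = S \<union> U" "tsat S \<phi>" "tsat U \<psi>" by (elim exE conjE)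
    have "S \<subseteq> T" "U \<subseteq> T" using SU(1) by simp_all
    then have a: "tsat (team_comp S f) \<phi>" "tsat (team_comp U f) \<psi>" using ih1 ih2 SU(2,3) by simp_all
    have b: "team_comp T f = team_comp S f \<union> team_comp U f" using SU(1) comp_union by simp
    show "tsat (team_comp T f) (Disj \<phi> \<psi>)" unfolding tsat.simps
      by (rule exI[where x="team_comp S f"], rule exI[where x="team_comp U f"]) (simp only: a b simp_thms)
  next
    assume "tsat (team_comp T f) (Disj \<phi> \<psi>)"
    then have "\<exists>S U. team_comp T f = S \<union> U \<and> tsat S \<phi> \<and> tsat U \<psi>" by (simp only: tsat.simps)
    then obtain S' U' where SU: "team_comp T f = S' \<union> U'" "tsat S' \<phi>" "tsat U' \<psi>" by (elim exE conjE)
    define S where "S = {t\<in>T. t \<circ> f \<in> S'}"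
    define U where "U = {t\<in>T. t \<circ> f \<in> U'}"
    have img: "(\<lambda>t. t \<circ> f) ` T = S' \<union> U'" using SU(1) unfolding team_comp_def .
    have c1: "team_comp S f = S'"
    proof
      show "team_comp S f \<subseteq> S'" unfolding team_comp_def S_def by auto
      show "S' \<subseteq> team_comp S f"
      proof
        fix x assume x: "x \<in> S'"
        then have "x \<in> (\<lambda>t. t \<circ> f) ` T" using img by simp
        then obtain t where "t \<in> T" "x = t \<circ> f" by auto
        then show "x \<in> team_comp S f" using x unfolding team_comp_def S_def by auto
      qed
    qed
    have c2: "team_comp U f = U'"
    proof
      show "team_comp U f \<subseteq> U'" unfolding team_comp_def U_def by auto
      show "U' \<subseteq> team_comp U f"
      proof
        fix x assume x: "x \<in> U'"
        then have "x \<in> (\<lambda>t. t \<circ> f) ` T" using img by simp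
        then obtain t where "t \<in> T" "x = t \<circ> f" by auto
        then show "x \<in> team_comp U f" using x unfolding team_comp_def U_def by auto
      qed
    qed
    have c3: "T = S \<union> U"
    proof
      show "T \<subseteq> S \<union> U"
      proof
        fix t assume t: "t \<in> T"
        then have "t \<circ> f \<in> (\<lambda>t. t \<circ> f) ` T" by (rule imageI)
        then have "t \<circ> f \<in> S' \<union> U'" using img by simp
        then show "t \<in> S \<union> U" using t unfolding S_def U_def by auto
      qed
      show "S \<union> U \<subseteq> T" unfolding S_def U_def by auto
    qed
    have "S \<subseteq> T" "U \<subseteq> T" by (auto simp: S_def U_def)
    then have a: "tsat S \<phi>" "tsat U \<psi>" using ih1 ih2 SU(2,3) c1 c2 by simp_all
    show "tsat T (Disj \<phi> \<psi>)" unfolding tsat.simps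
      by (rule exI[where x=S], rule exI[where x=U]) (simp only: a c3 simp_thms)
  qed
next
  case (Next \<phi>)
  then show ?case by simp
next
  case (Fut \<phi>)
  have IH: "\<And>T f. team_stuttering_fun f T \<Longrightarrow> tsat T \<phi> = tsat (team_comp T f) \<phi>"
  proof -
    have nx: "noX \<phi>" using Fut.prems(1) by simp
    show "\<And>T f. team_stuttering_fun f T \<Longrightarrow> tsat T \<phi> = tsat (team_comp T f) \<phi>"
      using Fut.IH[OF nx] by blast
  qed
  have sm: "strict_mono f" "f 0 = 0" using Fut.prems unfolding team_stuttering_fun_def by auto
  show ?case
  proof
    assume "tsat T (Fut \<phi>)"
    then obtain m where m: "tsat (team_suffix m T) \<phi>" by auto
    obtain k where "f k \<le> m" "m < f (Suc k)" using block[OF sm] by blast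
    then show "tsat (team_comp T f) (Fut \<phi>)" using suffix_equiv[OF IH Fut.prems(2)] m by auto
  next
    assume "tsat (team_comp T f) (Fut \<phi>)"
    then obtain k where "tsat (team_suffix k (team_comp T f)) \<phi>" by auto
    then show "tsat T (Fut \<phi>)" using suffix_equiv'[OF IH Fut.prems(2)] by auto
  qed
next
  case (Glob \<phi>)
  have IH: "\<And>T f. team_stuttering_fun f T \<Longrightarrow> tsat T \<phi> = tsat (team_comp T f) \<phi>"
  proof -
    have nx: "noX \<phi>" using Glob.prems(1) by simp
    show "\<And>T f. team_stuttering_fun f T \<Longrightarrow> tsat T \<phi> = tsat (team_comp T f) \<phi>"
      using Glob.IH[OF nx] by blast
  qed
  have sm: "strict_mono f" "f 0 = 0" using Glob.prems unfolding team_stuttering_fun_def by auto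
  show ?case
  proof
    assume a: "tsat T (Glob \<phi>)"
    show "tsat (team_comp T f) (Glob \<phi>)"
      using a suffix_equiv'[OF IH Glob.prems(2)] by auto
  next
    assume a: "tsat (team_comp T f) (Glob \<phi>)"
    show "tsat T (Glob \<phi>)"
    proof (simp, intro allI)
      fix m
      obtain k where "f k \<le> m" "m < f (Suc k)" using block[OF sm] by blast
      then show "tsat (team_suffix m T) \<phi>" using suffix_equiv[OF IH Glob.prems(2)] a by auto
    qed
  qed
next
  case (Until \<phi> \<psi>)
  have IH1: "\<And>T f. team_stuttering_fun f T \<Longrightarrow> tsat T \<phi> = tsat (team_comp T f) \<phi>"
  proof -
    have nx: "noX \<phi>" using Until.prems(1) by simp
    show "\<And>T f. team_stuttering_fun f T \<Longrightarrow> tsat T \<phi> = tsat (team_comp T f) \<phi>"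
      using Until.IH(1)[OF nx] by blast
  qed
  have IH2: "\<And>T f. team_stuttering_fun f T \<Longrightarrow> tsat T \<psi> = tsat (team_comp T f) \<psi>"
  proof -
    have nx: "noX \<psi>" using Until.prems(1) by simp
    show "\<And>T f. team_stuttering_fun f T \<Longrightarrow> tsat T \<psi> = tsat (team_comp T f) \<psi>"
      using Until.IH(2)[OF nx] by blast
  qed
  have sm: "strict_mono f" "f 0 = 0" using Until.prems unfolding team_stuttering_fun_def by auto
  have IH1': "\<forall>T f. team_stuttering_fun f T \<longrightarrow> tsat T \<phi> = tsat (team_comp T f) \<phi>" using IH1 by blast
  have IH2': "\<forall>T f. team_stuttering_fun f T \<longrightarrow> tsat T \<psi> = tsat (team_comp T f) \<psi>" using IH2 by blast
  note E1 = se(1)[OF Until.prems(2) IH1'] and E2 = se(1)[OF Until.prems(2) IH2']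
  note E1' = se(2)[OF Until.prems(2) IH1'] and E2' = se(2)[OF Until.prems(2) IH2']
  show ?case
  proof
    assume "tsat T (Until \<phi> \<psi>)"
    then obtain m where m: "tsat (team_suffix m T) \<psi>" "\<forall>j<m. tsat (team_suffix j T) \<phi>" by auto
    obtain k where k: "f k \<le> m" "m < f (Suc k)" using block[OF sm] by blast
    have "tsat (team_suffix k (team_comp T f)) \<psi>" using E2[OF k] m by auto
    moreover have "\<forall>j<k. tsat (team_suffix j (team_comp T f)) \<phi>"
    proof (intro allI impI)
      fix j assume "j < k"
      then have "f j < f k" using sm strict_mono_less by blast
      then have "f j < m" using k by simp
      then have "tsat (team_suffix (f j) T) \<phi>" using m(2) by simp
      then show "tsat (team_suffix j (team_comp T f)) \<phi>" using E1'[of j] by simp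
    qed
    ultimately show "tsat (team_comp T f) (Until \<phi> \<psi>)" by auto
  next
    assume "tsat (team_comp T f) (Until \<phi> \<psi>)"
    then obtain k where k: "tsat (team_suffix k (team_comp T f)) \<psi>"
      "\<forall>j<k. tsat (team_suffix j (team_comp T f)) \<phi>" by auto
    have "tsat (team_suffix (f k) T) \<psi>" using E2' k by auto
    moreover have "\<forall>i<f k. tsat (team_suffix i T) \<phi>"
    proof (intro allI impI)
      fix i assume i: "i < f k"
      obtain j where j: "f j \<le> i" "i < f (Suc j)" using block[OF sm] by blast
      have "j < k" using j i sm(1) by (meson le_less_trans strict_mono_less)
      then show "tsat (team_suffix i T) \<phi>" using E1[OF j] k by auto
    qed
    ultimately show "tsat T (Until \<phi> \<psi>)" by auto
  qed
next
  case (Release \<phi> \<psi>)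
  have IH1: "\<And>T f. team_stuttering_fun f T \<Longrightarrow> tsat T \<phi> = tsat (team_comp T f) \<phi>"
  proof -
    have nx: "noX \<phi>" using Release.prems(1) by simp
    show "\<And>T f. team_stuttering_fun f T \<Longrightarrow> tsat T \<phi> = tsat (team_comp T f) \<phi>"
      using Release.IH(1)[OF nx] by blast
  qed
  have IH2: "\<And>T f. team_stuttering_fun f T \<Longrightarrow> tsat T \<psi> = tsat (team_comp T f) \<psi>"
  proof -
    have nx: "noX \<psi>" using Release.prems(1) by simp
    show "\<And>T f. team_stuttering_fun f T \<Longrightarrow> tsat T \<psi> = tsat (team_comp T f) \<psi>"
      using Release.IH(2)[OF nx] by blast
  qed
  have sm: "strict_mono f" "f 0 = 0" using Release.prems unfolding team_stuttering_fun_def by auto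
  have IH1': "\<forall>T f. team_stuttering_fun f T \<longrightarrow> tsat T \<phi> = tsat (team_comp T f) \<phi>" using IH1 by blast
  have IH2': "\<forall>T f. team_stuttering_fun f T \<longrightarrow> tsat T \<psi> = tsat (team_comp T f) \<psi>" using IH2 by blast
  note E1 = se(1)[OF Release.prems(2) IH1'] and E2 = se(1)[OF Release.prems(2) IH2']
  note E1' = se(2)[OF Release.prems(2) IH1'] and E2' = se(2)[OF Release.prems(2) IH2']
  show ?case
  proof
    assume a: "tsat T (Release \<phi> \<psi>)"
    show "tsat (team_comp T f) (Release \<phi> \<psi>)"
    proof (simp, intro allI)
      fix k
      from a have "tsat (team_suffix (f k) T) \<psi> \<or> (\<exists>i<f k. tsat (team_suffix i T) \<phi>)" by auto
      then show "tsat (team_suffix k (team_comp T f)) \<psi> \<or>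
          (\<exists>j<k. tsat (team_suffix j (team_comp T f)) \<phi>)"
      proof
        assume "tsat (team_suffix (f k) T) \<psi>" then show ?thesis using E2' by auto
      next
        assume "\<exists>i<f k. tsat (team_suffix i T) \<phi>"
        then obtain i where i: "i < f k" "tsat (team_suffix i T) \<phi>" by auto
        obtain j where j: "f j \<le> i" "i < f (Suc j)" using block[OF sm] by blast
        have "j < k" using j i sm(1) by (meson le_less_trans strict_mono_less)
        then show ?thesis using E1[OF j] i by auto
      qed
    qed
  next
    assume a: "tsat (team_comp T f) (Release \<phi> \<psi>)"
    show "tsat T (Release \<phi> \<psi>)"
    proof (simp, intro allI)
      fix m
      obtain k where k: "f k \<le> m" "m < f (Suc k)" using block[OF sm] by blast
      from a have "tsat (team_suffix k (team_comp T f)) \<psi> \<or>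
          (\<exists>j<k. tsat (team_suffix j (team_comp T f)) \<phi>)" by auto
      then show "tsat (team_suffix m T) \<psi> \<or> (\<exists>j<m. tsat (team_suffix j T) \<phi>)"
      proof
        assume "tsat (team_suffix k (team_comp T f)) \<psi>" then show ?thesis using E2[OF k] by auto
      next
        assume "\<exists>j<k. tsat (team_suffix j (team_comp T f)) \<phi>"
        then obtain j where j: "j < k" "tsat (team_suffix j (team_comp T f)) \<phi>" by auto
        have "f j < f k" using j sm strict_mono_less by blast
        then have "f j < m" using k by simp
        then show ?thesis using E1' j by auto
      qed
    qed
  qed
next
  case (Tilde \<phi>)
  then show ?case by simp
qed

theorem mainTheorem9:
  fixes \<phi> :: "'a ltl" and T T' :: "'a team"
  assumes "countable (UNIV :: 'a set)" and "infinite (UNIV :: 'a set)"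
    and "noX \<phi>"
    and "stutter_equiv T T'"
  shows "tsat T \<phi> \<longleftrightarrow> tsat T' \<phi>"
proof -
  obtain f f' where "team_stuttering_fun f T" "team_stuttering_fun f' T'"
    "team_comp T f = team_comp T' f'" using assms(4) unfolding stutter_equiv_def by blast
  then show ?thesis using key[OF assms(3)] by metis
qed

end
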